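(* Let $G$ be a finite group (with the discrete topology), let $G_1, G_2$ be subgroups of $G$, and let $\varphi \colon \widetilde G \to G$ be a continuous surjective homomorphism from a profinite group $\widetilde G$ such that the profinite groups $\varphi^{-1}(G_1)$ and $\varphi^{-1}(G_2)$ are not isomorphic. Assume that for every positive integer $n$, $\widetilde G$ has only finitely many open subgroups of index $n$. Then there exist a finite group $H$, a continuous surjective homomorphism $\psi \colon \widetilde G \to H$, and a group homomorphism $\theta \colon H \to G$ such that $\varphi = \theta \circ \psi$ and $\theta^{-1}(G_1)$ and $\theta^{-1}(G_2)$ are not isomorphic. *)

theory Defs
  imports "HOL-Analysis.Analysis" "HOL-Algebra.Algebra"
begin

definition topological_group :: "('a, 'b) monoid_scheme \<Rightarrow> 'a topology \<Rightarrow> bool" where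
  "topological_group G T \<longleftrightarrow> group G \<and> topspace T = carrier G \<and>
     continuous_map (prod_topology T T) T (\<lambda>(x, y). x \<otimes>\<^bsub>G\<^esub> y) \<and>
     continuous_map T T (\<lambda>x. inv\<^bsub>G\<^esub> x)"

definition totally_disconnected_space :: "'a topology \<Rightarrow> bool" where
  "totally_disconnected_space T \<longleftrightarrow> (\<forall>S. connectedin T S \<longrightarrow> (\<exists>a. S \<subseteq> {a}))"

definition profinite_group :: "('a, 'b) monoid_scheme \<Rightarrow> 'a topology \<Rightarrow> bool" where
  "profinite_group G T \<longleftrightarrow> topological_group G T \<and> compact_space T \<and>
     Hausdorff_space T \<and> totally_disconnected_space T"

definition top_group_isomorphic ::
  "('a, 'c) monoid_scheme \<Rightarrow> 'a topology \<Rightarrow> ('b, 'd) monoid_scheme \<Rightarrow> 'b topology \<Rightarrow> bool" where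
  "top_group_isomorphic G T H S \<longleftrightarrow> (\<exists>f. f \<in> iso G H \<and> homeomorphic_map T S f)"

definition open_subgroups_of_index :: "('a, 'b) monoid_scheme \<Rightarrow> 'a topology \<Rightarrow> nat \<Rightarrow> 'a set set" where
  "open_subgroups_of_index G T n =
     {K. subgroup K G \<and> openin T K \<and> card (rcosets\<^bsub>G\<^esub> K) = n}"

end

theory Submission
  imports Defs
begin

lemma closedin_const: "closedin Z {p \<in> topspace Z. c}"
  by (cases c) auto

locale prof = group G for G :: "('a, 'b) monoid_scheme" (structure) +
  fixes T :: "'a topology"
  assumes pg: "profinite_group G T"
begin

lemma tsp[simp]: "topspace T = carrier G"
  using pg by (simp add: profinite_group_def topological_group_def)

lemma cmult: "continuous_map (prod_topology T T) T (\<lambda>(x, y). x \<otimes> y)"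
  using pg by (simp add: profinite_group_def topological_group_def)

lemma cinv: "continuous_map T T (\<lambda>x. inv x)"
  using pg by (simp add: profinite_group_def topological_group_def)

lemma cpt: "compact_space T" and haus: "Hausdorff_space T" and tdisc: "totally_disconnected_space T"
  using pg by (auto simp: profinite_group_def)

lemma cont_mult:
  assumes "continuous_map Z T e1" "continuous_map Z T e2"
  shows "continuous_map Z T (\<lambda>p. e1 p \<otimes> e2 p)"
proof -
  have "continuous_map Z (prod_topology T T) (\<lambda>p. (e1 p, e2 p))"
    using assms by (intro continuous_map_pairedI)
  from continuous_map_compose[OF this cmult] show ?thesis by (simp add: o_def)
qed

lemma cont_inv:
  assumes "continuous_map Z T e"
  shows "continuous_map Z T (\<lambda>p. inv (e p))"
  using continuous_map_compose[OF assms cinv] by (simp add: o_def)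

lemma cont_const: "c \<in> carrier G \<Longrightarrow> continuous_map Z T (\<lambda>p. c)"
  by simp

lemma open_rcos:
  assumes U: "openin T U" and a: "a \<in> carrier G"
  shows "openin T (U #> a)"
proof -
  have Uc: "U \<subseteq> carrier G" using openin_subset[OF U] by simp
  have "continuous_map T T (\<lambda>x. x \<otimes> inv a)"
    using a by (intro cont_mult continuous_map_id[unfolded id_def] cont_const) auto
  from openin_continuous_map_preimage[OF this U]
  have "openin T {x \<in> carrier G. x \<otimes> inv a \<in> U}" by simp
  moreover have "{x \<in> carrier G. x \<otimes> inv a \<in> U} = U #> a"
  proof safe
    fix x assume x: "x \<in> carrier G" "x \<otimes> inv a \<in> U"
    then have "x = (x \<otimes> inv a) \<otimes> a" using a by (simp add: m_assoc)
    then show "x \<in> U #> a" using x unfolding r_coset_def by blast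
  next
    fix x assume "x \<in> U #> a"
    then obtain u where u: "u \<in> U" "x = u \<otimes> a" unfolding r_coset_def by blast
    then show "x \<in> carrier G" using Uc a by auto
    show "x \<otimes> inv a \<in> U" using u Uc a by (auto simp: m_assoc)
  qed
  ultimately show ?thesis by simp
qed

lemma open_subgroup_closed:
  assumes "subgroup U G" "openin T U"
  shows "closedin T U"
proof -
  interpret U: subgroup U G by fact
  have "carrier G - U = (\<Union>x\<in>carrier G - U. U #> x)"
  proof safe
    fix y assume "y \<in> carrier G" "y \<notin> U"
    then show "y \<in> (\<Union>x\<in>carrier G - U. U #> x)"
      using rcos_self[OF _ assms(1)] by blast
  next
    fix x y assume x: "x \<in> carrier G" "x \<notin> U" and y: "y \<in> U #> x"
    then obtain h where h: "h \<in> U" "y = h \<otimes> x" unfolding r_coset_def by blast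
    then show "y \<in> carrier G" using x by auto
    assume "y \<in> U"
    then have "inv h \<otimes> y \<in> U" using h by auto
    moreover have "inv h \<otimes> y = x" using h x by (simp add: m_assoc[symmetric])
    ultimately show False using x by simp
  qed
  moreover have "openin T (\<Union>x\<in>carrier G - U. U #> x)"
    using open_rcos assms by auto
  ultimately show ?thesis unfolding closedin_def using U.subset by simp
qed

lemma finite_cover:
  assumes W: "subgroup W G" "openin T W" and A: "subgroup A G" "closedin T A" and WA: "W \<subseteq> A"
  shows "\<exists>S. finite S \<and> S \<subseteq> A \<and> A = (\<Union>a\<in>S. W #> a)"
proof -
  interpret W: subgroup W G by fact
  interpret A: subgroup A G by fact
  have "compactin T A" using closedin_compact_space[OF cpt A(2)] .
  moreover have "\<forall>U\<in>(\<lambda>a. W #> a) ` A. openin T U" using open_rcos W A.subset by auto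
  moreover have "A \<subseteq> \<Union>((\<lambda>a. W #> a) ` A)" using rcos_self[OF _ W(1)] A.subset by blast
  ultimately obtain F where F: "finite F" "F \<subseteq> (\<lambda>a. W #> a) ` A" "A \<subseteq> \<Union>F"
    unfolding compactin_def by metis
  then obtain S where S: "S \<subseteq> A" "finite S" "F = (\<lambda>a. W #> a) ` S"
    by (meson finite_subset_image)
  have "(\<Union>a\<in>S. W #> a) \<subseteq> A"
    using S WA unfolding r_coset_def by auto
  then show ?thesis using S F by blast
qed

lemma rcosets_bound:
  assumes W: "subgroup W G" and S: "S \<subseteq> carrier G" "carrier G = (\<Union>a\<in>S. W #> a)"
  shows "rcosets W \<subseteq> (\<lambda>a. W #> a) ` S"
proof
  fix C assume "C \<in> rcosets W"
  then obtain x where x: "x \<in> carrier G" "C = W #> x" unfolding RCOSETS_def by blast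
  then obtain a where a: "a \<in> S" "x \<in> W #> a" using S by blast
  then have "W #> a = W #> x" using repr_independence[OF a(2) _ W] S by auto
  then show "C \<in> (\<lambda>a. W #> a) ` S" using x a by auto
qed

end

context prof begin

lemma clopen_sep:
  assumes x: "x \<in> carrier G" "x \<noteq> \<one>"
  shows "\<exists>C. closedin T C \<and> openin T C \<and> \<one> \<in> C \<and> x \<notin> C"
proof -
  have cc: "connected_component_of_set T \<one> = {\<one>}"
  proof -
    have "connectedin T (connected_component_of_set T \<one>)"
      by (rule connectedin_connected_component_of)
    then obtain a where "connected_component_of_set T \<one> \<subseteq> {a}"
      using tdisc unfolding totally_disconnected_space_def by blast
    moreover have "\<one> \<in> connected_component_of_set T \<one>"
      by (simp add: connected_component_of_refl)
    ultimately show ?thesis by blast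
  qed
  have "separated_between T (connected_component_of_set T \<one>) {x}"
  proof (rule separated_between_compact_connected_component)
    show "locally_compact_space T" by (rule compact_imp_locally_compact_space[OF cpt])
    show "Hausdorff_space T" by (rule haus)
    show "connected_component_of_set T \<one> \<in> connected_components_of T"
      by (simp add: connected_component_in_connected_components_of)
    show "compactin T (connected_component_of_set T \<one>)" using cc by simp
    show "closedin T {x}" using x by (simp add: closedin_t1_singleton Hausdorff_imp_t1_space haus)
    show "disjnt (connected_component_of_set T \<one>) {x}" using cc x by simp
  qed
  then show ?thesis using cc unfolding separated_between by auto
qed

lemma sep_subgroup:
  assumes x: "x \<in> carrier G" "x \<noteq> \<one>"
  shows "\<exists>U. subgroup U G \<and> openin T U \<and> x \<notin> U"
proof -
  obtain C where C: "closedin T C" "openin T C" "\<one> \<in> C" "x \<notin> C"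
    using clopen_sep[OF x] by blast
  have Cc: "C \<subseteq> carrier G" using closedin_subset[OF C(1)] by simp
  define W where "W = {p \<in> topspace (prod_topology T T). (\<lambda>(x, y). x \<otimes> y) p \<in> C}"
  have W: "openin (prod_topology T T) W"
    unfolding W_def by (rule openin_continuous_map_preimage[OF cmult C(2)])
  have "C \<times> {\<one>} \<subseteq> W" using Cc unfolding W_def by auto
  then obtain U V where UV: "openin T U" "openin T V" "C \<subseteq> U" "\<one> \<in> V" "U \<times> V \<subseteq> W"
    using tube_lemma_left[OF W closedin_compact_space[OF cpt C(1)], of \<one>] by auto
  have Vc: "V \<subseteq> carrier G" using openin_subset[OF UV(2)] by simp
  have CV: "c \<otimes> v \<in> C" if "c \<in> C" "v \<in> V" for c v
  proof -
    have "(c, v) \<in> W" using UV(3,5) that by blast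
    then show ?thesis unfolding W_def by auto
  qed
  define V' where "V' = {v \<in> topspace T. v \<in> V \<and> inv v \<in> V}"
  have "openin T {v \<in> topspace T. inv v \<in> V}"
    by (rule openin_continuous_map_preimage[OF cinv UV(2)])
  then have V'o: "openin T V'"
  proof -
    have "V' = V \<inter> {v \<in> topspace T. inv v \<in> V}" unfolding V'_def using Vc by auto
    then show ?thesis using openin_Int[OF UV(2) \<open>openin T {v \<in> topspace T. inv v \<in> V}\<close>] by simp
  qed
  define St where "St = {g \<in> carrier G. C #> g = C}"
  have St: "subgroup St G"
  proof
    show "St \<subseteq> carrier G" unfolding St_def by auto
    show "\<one> \<in> St" unfolding St_def using Cc by simp
    fix g h assume "g \<in> St" "h \<in> St"
    then show "g \<otimes> h \<in> St" unfolding St_def using Cc by (simp add: coset_mult_assoc[symmetric])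
  next
    fix g assume g: "g \<in> St"
    then have "C #> inv g = (C #> g) #> inv g" unfolding St_def by simp
    also have "\<dots> = C #> (g \<otimes> inv g)" using g Cc unfolding St_def by (intro coset_mult_assoc) auto
    also have "\<dots> = C" using g Cc unfolding St_def by simp
    finally show "inv g \<in> St" using g unfolding St_def by simp
  qed
  have V'St: "V' \<subseteq> St"
  proof
    fix v assume v: "v \<in> V'"
    then have vc: "v \<in> carrier G" "v \<in> V" "inv v \<in> V" unfolding V'_def by auto
    have s1: "C #> v \<subseteq> C" using CV vc unfolding r_coset_def by auto
    have s2: "C #> inv v \<subseteq> C" using CV vc unfolding r_coset_def by auto
    have "C = (C #> inv v) #> v" using Cc vc by (simp add: coset_mult_assoc)
    also have "\<dots> \<subseteq> C #> v" using s2 unfolding r_coset_def by auto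
    finally show "v \<in> St" using s1 vc unfolding St_def by auto
  qed
  have StC: "St \<subseteq> C"
  proof
    fix g assume g: "g \<in> St"
    have "\<one> \<otimes> g \<in> C #> g" using C(3) unfolding r_coset_def by blast
    moreover have "g \<in> carrier G" "C #> g = C" using g unfolding St_def by auto
    ultimately show "g \<in> C" by simp
  qed
  have "openin T St"
  proof (subst openin_subopen, intro ballI)
    fix g assume g: "g \<in> St"
    then have gc: "g \<in> carrier G" unfolding St_def by auto
    have "openin T (V' #> g)" using open_rcos[OF V'o gc] .
    moreover have "g \<in> V' #> g" using UV(4) gc unfolding V'_def r_coset_def by force
    moreover have "V' #> g \<subseteq> St"
      using V'St g subgroup.m_closed[OF St] unfolding r_coset_def by auto
    ultimately show "\<exists>T'. openin T T' \<and> g \<in> T' \<and> T' \<subseteq> St" by blast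
  qed
  then show ?thesis using St StC C(4) by blast
qed

end

locale prof2 = prof +
  assumes finidx: "\<And>n::nat. n > 0 \<Longrightarrow> finite (open_subgroups_of_index G T n)"
begin

definition smallsg :: "'a set \<Rightarrow> nat \<Rightarrow> 'a set set" where
  "smallsg A k = {U. subgroup U G \<and> openin T U \<and> U \<subseteq> A \<and>
     (\<exists>S. finite S \<and> card S \<le> k \<and> S \<subseteq> A \<and> A = (\<Union>a\<in>S. U #> a))}"

definition Mk :: "'a set \<Rightarrow> nat \<Rightarrow> 'a set" where
  "Mk A k = A \<inter> \<Inter> (smallsg A k)"

definition osg :: "'a set \<Rightarrow> bool" where
  "osg A \<longleftrightarrow> subgroup A G \<and> openin T A"

lemma smallsg_mono: "k \<le> k' \<Longrightarrow> smallsg A k \<subseteq> smallsg A k'"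
  unfolding smallsg_def by fastforce

lemma Mk_anti: "k \<le> k' \<Longrightarrow> Mk A k' \<subseteq> Mk A k"
  unfolding Mk_def using smallsg_mono by blast

lemma carrier_cover:
  assumes "osg A"
  shows "\<exists>S. finite S \<and> S \<subseteq> carrier G \<and> carrier G = (\<Union>b\<in>S. A #> b)"
proof -
  have "closedin T (carrier G)" using closedin_topspace[of T] by simp
  then show ?thesis using finite_cover[of A "carrier G"] assms subgroup_self
    unfolding osg_def using subgroup.subset by blast
qed

lemma cover_lift:
  assumes A: "subgroup A G" and S': "finite S'" "S' \<subseteq> carrier G" "carrier G = (\<Union>b\<in>S'. A #> b)"
    and U: "U \<in> smallsg A k"
  shows "U \<in> smallsg (carrier G) (k * card S')"
proof -
  obtain S where S: "finite S" "card S \<le> k" "S \<subseteq> A" "A = (\<Union>a\<in>S. U #> a)"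
    and Us: "subgroup U G" "openin T U" "U \<subseteq> A"
    using U unfolding smallsg_def by blast
  have Ac: "A \<subseteq> carrier G" using subgroup.subset[OF A] .
  have Uc: "U \<subseteq> carrier G" using Us Ac by auto
  define S2 where "S2 = (\<lambda>(a,b). a \<otimes> b) ` (S \<times> S')"
  have "card S2 \<le> card (S \<times> S')" unfolding S2_def using S S' by (intro card_image_le) auto
  also have "\<dots> = card S * card S'" by (simp add: card_cartesian_product)
  also have "\<dots> \<le> k * card S'" using S by simp
  finally have c: "card S2 \<le> k * card S'" .
  have S2c: "S2 \<subseteq> carrier G" unfolding S2_def using S(3) S'(2) Ac by auto
  have "carrier G = (\<Union>c\<in>S2. U #> c)"
  proof
    show "(\<Union>c\<in>S2. U #> c) \<subseteq> carrier G" using S2c Uc unfolding r_coset_def by auto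
  next
    show "carrier G \<subseteq> (\<Union>c\<in>S2. U #> c)"
    proof
      fix x assume x: "x \<in> carrier G"
      then obtain b where b: "b \<in> S'" "x \<in> A #> b" using S' by blast
      then obtain a' where a': "a' \<in> A" "x = a' \<otimes> b" unfolding r_coset_def by blast
      then obtain a where a: "a \<in> S" "a' \<in> U #> a" using S by blast
      then obtain u where u: "u \<in> U" "a' = u \<otimes> a" unfolding r_coset_def by blast
      have uc: "u \<in> carrier G" "a \<in> carrier G" "b \<in> carrier G" using u a b S(3) S'(2) Uc Ac by auto
      have "x = u \<otimes> (a \<otimes> b)" using u(2) a'(2) uc by (simp add: m_assoc)
      then have "x \<in> U #> (a \<otimes> b)" using u unfolding r_coset_def by blast
      moreover have "a \<otimes> b \<in> S2" using a b unfolding S2_def by blast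
      ultimately show "x \<in> (\<Union>c\<in>S2. U #> c)" by blast
    qed
  qed
  then show ?thesis unfolding smallsg_def using Us Uc S2c c S finite_imageI[of "S \<times> S'"] S'
    unfolding S2_def by blast
qed

lemma smallsg_carrier_finite: "finite (smallsg (carrier G) k)"
proof -
  have "smallsg (carrier G) k \<subseteq> (\<Union>n\<in>{1..k}. open_subgroups_of_index G T n)"
  proof
    fix U assume U: "U \<in> smallsg (carrier G) k"
    then obtain S where S: "finite S" "card S \<le> k" "S \<subseteq> carrier G" "carrier G = (\<Union>a\<in>S. U #> a)"
      and Us: "subgroup U G" "openin T U" unfolding smallsg_def by blast
    have "rcosets U \<subseteq> (\<lambda>a. U #> a) ` S" using rcosets_bound[OF Us(1) S(3,4)] .
    then have "card (rcosets U) \<le> card ((\<lambda>a. U #> a) ` S)" using S by (intro card_mono) auto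
    also have "\<dots> \<le> card S" using card_image_le S by blast
    finally have c1: "card (rcosets U) \<le> k" using S by simp
    have "U \<in> rcosets U" using subgroup.subgroup_in_rcosets[OF Us(1) is_group] .
    moreover have "finite (rcosets U)" using \<open>rcosets U \<subseteq> _\<close> S by (meson finite_imageI finite_subset)
    ultimately have "card (rcosets U) \<ge> 1" by (metis One_nat_def Suc_leI card_gt_0_iff empty_iff)
    then show "U \<in> (\<Union>n\<in>{1..k}. open_subgroups_of_index G T n)"
      using c1 Us unfolding open_subgroups_of_index_def by auto
  qed
  moreover have "finite (\<Union>n\<in>{1..k}. open_subgroups_of_index G T n)"
    using finidx by auto
  ultimately show ?thesis by (rule finite_subset)
qed

lemma smallsg_finite:
  assumes "osg A" shows "finite (smallsg A k)"
proof -
  obtain S' where S': "finite S'" "S' \<subseteq> carrier G" "carrier G = (\<Union>b\<in>S'. A #> b)"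
    using carrier_cover[OF assms] by blast
  have "smallsg A k \<subseteq> smallsg (carrier G) (k * card S')"
    using cover_lift[OF _ S'] assms unfolding osg_def by blast
  then show ?thesis using smallsg_carrier_finite finite_subset by blast
qed

lemma Mk_osg:
  assumes "osg A" shows "osg (Mk A k)" and "Mk A k \<subseteq> A"
proof -
  have A: "subgroup A G" "openin T A" using assms unfolding osg_def by auto
  show "Mk A k \<subseteq> A" unfolding Mk_def by auto
  have "openin T (Mk A k)" unfolding Mk_def
    using smallsg_finite[OF assms] A(2) by (intro openin_Int_Inter) (auto simp: smallsg_def)
  moreover have "subgroup (Mk A k) G"
  proof
    show "Mk A k \<subseteq> carrier G" unfolding Mk_def using subgroup.subset[OF A(1)] by auto
    show "\<one> \<in> Mk A k" unfolding Mk_def using A(1) by (auto simp: smallsg_def subgroup.one_closed)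
    fix x y assume "x \<in> Mk A k" "y \<in> Mk A k"
    then show "x \<otimes> y \<in> Mk A k" unfolding Mk_def using A(1)
      by (auto simp: smallsg_def subgroup.m_closed)
  next
    fix x assume "x \<in> Mk A k"
    then show "inv x \<in> Mk A k" unfolding Mk_def using A(1)
      by (auto simp: smallsg_def subgroup.m_inv_closed)
  qed
  ultimately show "osg (Mk A k)" unfolding osg_def by simp
qed

lemma osg_closed: "osg A \<Longrightarrow> closedin T A"
  unfolding osg_def using open_subgroup_closed by blast

lemma Mk_triv:
  assumes A: "osg A" and y: "\<And>k. y \<in> Mk A k"
  shows "y = \<one>"
proof (rule ccontr)
  assume ne: "y \<noteq> \<one>"
  have yA: "y \<in> A" using y[of 0] unfolding Mk_def by auto
  have Ac: "A \<subseteq> carrier G" using A unfolding osg_def using subgroup.subset by blast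
  then obtain U where U: "subgroup U G" "openin T U" "y \<notin> U" using sep_subgroup ne yA by blast
  have W: "subgroup (U \<inter> A) G" using U A unfolding osg_def by (intro subgroups_Inter_pair) auto
  have Wo: "openin T (U \<inter> A)" using U A unfolding osg_def by auto
  obtain S where S: "finite S" "S \<subseteq> A" "A = (\<Union>a\<in>S. (U \<inter> A) #> a)"
    using finite_cover[OF W Wo _ osg_closed[OF A]] A unfolding osg_def by blast
  have "U \<inter> A \<in> smallsg A (card S)" unfolding smallsg_def using W Wo S by blast
  then have "y \<notin> Mk A (card S)" using U unfolding Mk_def by blast
  then show False using y by blast
qed

lemma Mk_nbhd:
  assumes A: "osg A" and Ob: "openin T Ob" "\<one> \<in> Ob"
  shows "\<exists>k. Mk A k \<subseteq> Ob"
proof (rule ccontr)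
  assume "\<not> ?thesis"
  then have ne: "\<And>k. Mk A k - Ob \<noteq> {}" by blast
  have "(\<Inter>k. Mk A k - Ob) \<noteq> {}"
  proof (rule compact_space_imp_nest[OF cpt])
    show "closedin T (Mk A k - Ob)" for k
      using osg_closed[OF Mk_osg(1)[OF A]] Ob by (intro closedin_diff) auto
    show "Mk A k - Ob \<noteq> {}" for k by (rule ne)
    show "decseq (\<lambda>k. Mk A k - Ob)" unfolding decseq_def using Mk_anti by blast
  qed
  then obtain y where "\<And>k. y \<in> Mk A k" "y \<notin> Ob" by blast
  then show False using Mk_triv[OF A] Ob by blast
qed

end

context group begin
lemma gid3: "a \<in> carrier G \<Longrightarrow> b \<in> carrier G \<Longrightarrow> inv a \<otimes> (a \<otimes> b) = b"
  by (simp add: m_assoc[symmetric])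
lemma gid3': "a \<in> carrier G \<Longrightarrow> b \<in> carrier G \<Longrightarrow> a \<otimes> (inv a \<otimes> b) = b"
  by (simp add: m_assoc[symmetric])
lemma gid1: "a \<in> carrier G \<Longrightarrow> b \<in> carrier G \<Longrightarrow> c \<in> carrier G \<Longrightarrow> inv (a \<otimes> b \<otimes> inv c) \<otimes> (a \<otimes> b) = c"
  by (simp add: m_assoc inv_mult_group gid3 gid3')
lemma gid2: "a \<in> carrier G \<Longrightarrow> b \<in> carrier G \<Longrightarrow> c \<in> carrier G \<Longrightarrow> (a \<otimes> b \<otimes> inv c) \<otimes> c = a \<otimes> b"
  by (simp add: m_assoc)
lemma gid4: "a \<in> carrier G \<Longrightarrow> b \<in> carrier G \<Longrightarrow> (a \<otimes> b) \<otimes> inv b = a"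
  by (simp add: m_assoc)
lemma gid5: "x \<in> carrier G \<Longrightarrow> b \<in> carrier G \<Longrightarrow> y \<in> carrier G \<Longrightarrow> z \<in> carrier G \<Longrightarrow>
   (x \<otimes> inv b) \<otimes> (b \<otimes> inv y) \<otimes> (y \<otimes> z) = x \<otimes> z"
  by (simp add: m_assoc gid3 gid3')
lemma gid6: "a \<in> carrier G \<Longrightarrow> b \<in> carrier G \<Longrightarrow> c \<in> carrier G \<Longrightarrow> (a \<otimes> c) \<otimes> inv (b \<otimes> c) = a \<otimes> inv b"
  by (simp add: m_assoc inv_mult_group gid3 gid3')
lemma gid7: "a \<in> carrier G \<Longrightarrow> b \<in> carrier G \<Longrightarrow> a = (a \<otimes> inv b) \<otimes> b"
  by (simp add: m_assoc)
end

context prof2 begin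

definition modiso :: "'a set \<Rightarrow> 'a set \<Rightarrow> 'a set \<Rightarrow> ('a \<Rightarrow> 'a) \<Rightarrow> bool" where
  "modiso N A B F \<longleftrightarrow> (\<forall>x\<in>A. F x \<in> B) \<and> (\<forall>x\<in>A. \<forall>y\<in>A. F x \<otimes> F y \<otimes> inv (F (x \<otimes> y)) \<in> N) \<and>
     (\<forall>x\<in>A. F x \<in> N \<longleftrightarrow> x \<in> N) \<and> (\<forall>z\<in>B. \<exists>x\<in>A. z \<otimes> inv (F x) \<in> N)"

lemma transport:
  assumes N: "N \<lhd> G" "openin T N" and A: "osg A" and B: "osg B" and NA: "N \<subseteq> A" and NB: "N \<subseteq> B"
    and F: "modiso N A B F" and V: "V \<in> smallsg B k" and NV: "N \<subseteq> V"
  shows "{x \<in> A. F x \<in> V} \<in> smallsg A k"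
proof -
  interpret A: subgroup A G using A unfolding osg_def by blast
  interpret B: subgroup B G using B unfolding osg_def by blast
  interpret N: normal N G by fact
  have FB: "\<And>x. x \<in> A \<Longrightarrow> F x \<in> B" using F unfolding modiso_def by blast
  have Fh: "\<And>x y. x \<in> A \<Longrightarrow> y \<in> A \<Longrightarrow> F x \<otimes> F y \<otimes> inv (F (x \<otimes> y)) \<in> N"
    using F unfolding modiso_def by blast
  have FN: "\<And>x. x \<in> A \<Longrightarrow> F x \<in> N \<longleftrightarrow> x \<in> N" using F unfolding modiso_def by blast
  have Fs: "\<And>z. z \<in> B \<Longrightarrow> \<exists>x\<in>A. z \<otimes> inv (F x) \<in> N" using F unfolding modiso_def by blast
  have Fc: "\<And>x. x \<in> A \<Longrightarrow> F x \<in> carrier G" using FB B.subset by blast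
  obtain S where S: "finite S" "card S \<le> k" "S \<subseteq> B" "B = (\<Union>a\<in>S. V #> a)"
    and Vs: "subgroup V G" "openin T V" "V \<subseteq> B"
    using V unfolding smallsg_def by blast
  interpret V: subgroup V G by fact
  have F1: "F \<one> \<in> N" using FN[of \<one>] by simp
  have Finv: "F x \<otimes> F (inv x) \<in> N" if x: "x \<in> A" for x
  proof -
    have "(F x \<otimes> F (inv x) \<otimes> inv (F (x \<otimes> inv x))) \<otimes> F (x \<otimes> inv x) \<in> N"
      using Fh[of x "inv x"] x F1 by simp
    then show ?thesis using x by (simp add: gid2 Fc)
  qed
  have V1: "F (x \<otimes> y) \<in> V" if "x \<in> A" "y \<in> A" "F x \<otimes> F y \<in> V" for x y
  proof -
    have "inv (F x \<otimes> F y \<otimes> inv (F (x \<otimes> y))) \<otimes> (F x \<otimes> F y) \<in> V"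
      using Fh[of x y] that NV by auto
    then show ?thesis using that by (simp add: gid1 Fc)
  qed
  have V2: "F x \<otimes> F y \<in> V" if "x \<in> A" "y \<in> A" "F (x \<otimes> y) \<in> V" for x y
  proof -
    have "(F x \<otimes> F y \<otimes> inv (F (x \<otimes> y))) \<otimes> F (x \<otimes> y) \<in> V"
      using Fh[of x y] that NV by auto
    then show ?thesis using that by (simp add: gid2 Fc)
  qed
  define U where "U = {x \<in> A. F x \<in> V}"
  have Usg: "subgroup U G"
  proof
    show "U \<subseteq> carrier G" unfolding U_def by auto
    show "\<one> \<in> U" unfolding U_def using F1 NV by auto
    fix x y assume "x \<in> U" "y \<in> U"
    then show "x \<otimes> y \<in> U" unfolding U_def using V1 by auto
  next
    fix x assume x: "x \<in> U"
    then have "inv (F x) \<otimes> (F x \<otimes> F (inv x)) \<in> V" unfolding U_def using Finv NV by auto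
    then show "inv x \<in> U" using x unfolding U_def by (simp add: gid3 Fc)
  qed
  have Uo: "openin T U"
  proof (subst openin_subopen, intro ballI)
    fix x assume x: "x \<in> U"
    have xc: "x \<in> carrier G" using x unfolding U_def by auto
    have "N #> x \<subseteq> U"
    proof
      fix y assume "y \<in> N #> x"
      then obtain n where n: "n \<in> N" "y = n \<otimes> x" unfolding r_coset_def by blast
      have "F n \<otimes> F x \<in> V" using n x FN[of n] NA NV unfolding U_def by auto
      then show "y \<in> U" using V1[of n x] n x NA unfolding U_def by auto
    qed
    moreover have "x \<in> N #> x" using rcos_self[OF xc normal_imp_subgroup[OF N(1)]] .
    ultimately show "\<exists>T'. openin T T' \<and> x \<in> T' \<and> T' \<subseteq> U" using open_rcos[OF N(2) xc] by blast
  qed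
  have cho: "\<forall>b\<in>S. \<exists>c\<in>A. b \<otimes> inv (F c) \<in> N" using Fs S(3) by blast
  then obtain c where c: "\<And>b. b \<in> S \<Longrightarrow> c b \<in> A \<and> b \<otimes> inv (F (c b)) \<in> N" by metis
  have cover: "A = (\<Union>a\<in>c ` S. U #> a)"
  proof
    show "(\<Union>a\<in>c ` S. U #> a) \<subseteq> A" using c unfolding U_def r_coset_def by auto
  next
    show "A \<subseteq> (\<Union>a\<in>c ` S. U #> a)"
    proof
      fix x assume x: "x \<in> A"
      then have "F x \<in> B" by (rule FB)
      then obtain b where b: "b \<in> S" "F x \<in> V #> b" using S(4) by blast
      have bc: "b \<in> carrier G" using b S(3) by auto
      have "F x \<otimes> inv b \<in> V" using V.rcos_module_imp[OF is_group bc b(2)] .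
      have cb: "c b \<in> A" "b \<otimes> inv (F (c b)) \<in> N" using c b by auto
      have "(F x \<otimes> inv b) \<otimes> (b \<otimes> inv (F (c b))) \<otimes> (F (c b) \<otimes> F (inv (c b))) \<in> V"
        using \<open>F x \<otimes> inv b \<in> V\<close> cb Finv[of "c b"] NV by auto
      then have "F x \<otimes> F (inv (c b)) \<in> V" using x cb bc by (simp add: gid5 Fc)
      then have "F (x \<otimes> inv (c b)) \<in> V" using V1 x cb by auto
      then have "x \<otimes> inv (c b) \<in> U" unfolding U_def using x cb by auto
      then have "(x \<otimes> inv (c b)) \<otimes> c b \<in> U #> c b" unfolding r_coset_def by blast
      then have "x \<in> U #> c b" using x cb by (simp add: m_assoc)
      then show "x \<in> (\<Union>a\<in>c ` S. U #> a)" using b by blast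
    qed
  qed
  have "card (c ` S) \<le> k" using S card_image_le[OF S(1), of c] by simp
  then show ?thesis unfolding U_def[symmetric] smallsg_def using Usg Uo cover S(1) c
    unfolding U_def by blast
qed

lemma transport2:
  assumes N: "N \<lhd> G" "openin T N" and A: "osg A" and B: "osg B" and NA: "N \<subseteq> A" and NB: "N \<subseteq> B"
    and F: "modiso N A B F" and NM: "N \<subseteq> Mk B k"
    and x: "x \<in> A" and y: "y \<in> A" and xy: "x \<otimes> inv y \<in> Mk A k"
  shows "F x \<otimes> inv (F y) \<in> Mk B k"
proof -
  interpret A: subgroup A G using A unfolding osg_def by blast
  interpret B: subgroup B G using B unfolding osg_def by blast
  interpret N: normal N G by fact
  have FB: "\<And>x. x \<in> A \<Longrightarrow> F x \<in> B" using F unfolding modiso_def by blast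
  have Fh: "\<And>x y. x \<in> A \<Longrightarrow> y \<in> A \<Longrightarrow> F x \<otimes> F y \<otimes> inv (F (x \<otimes> y)) \<in> N"
    using F unfolding modiso_def by blast
  have FN: "\<And>x. x \<in> A \<Longrightarrow> F x \<in> N \<longleftrightarrow> x \<in> N" using F unfolding modiso_def by blast
  have Fc: "\<And>x. x \<in> A \<Longrightarrow> F x \<in> carrier G" using FB B.subset by blast
  have F1: "F \<one> \<in> N" using FN[of \<one>] by simp
  have Finv: "F x \<otimes> F (inv x) \<in> N" if x: "x \<in> A" for x
  proof -
    have "(F x \<otimes> F (inv x) \<otimes> inv (F (x \<otimes> inv x))) \<otimes> F (x \<otimes> inv x) \<in> N"
      using Fh[of x "inv x"] x F1 N(1) normal_imp_subgroup subgroup.m_closed by fastforce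
    then show ?thesis using x by (simp add: gid2 Fc)
  qed
  have "F x \<otimes> inv (F y) \<in> V" if V: "V \<in> smallsg B k" for V
  proof -
    have NV: "N \<subseteq> V" using NM V unfolding Mk_def by auto
    have Vs: "subgroup V G" using V unfolding smallsg_def by auto
    have "{x \<in> A. F x \<in> V} \<in> smallsg A k" by (rule transport[OF N A B NA NB F V NV])
    then have "F (x \<otimes> inv y) \<in> V" using xy unfolding Mk_def by auto
    then have "(F x \<otimes> F (inv y) \<otimes> inv (F (x \<otimes> inv y))) \<otimes> F (x \<otimes> inv y) \<in> V"
      using Fh[of x "inv y"] x y NV subgroup.m_closed[OF Vs] by auto
    then have "F x \<otimes> F (inv y) \<in> V" using x y by (simp add: gid2 Fc)
    then have "(F x \<otimes> F (inv y)) \<otimes> inv (F y \<otimes> F (inv y)) \<in> V"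
      using Finv[OF y] NV subgroup.m_closed[OF Vs] subgroup.m_inv_closed[OF Vs] by auto
    then show ?thesis using x y by (simp add: gid6 Fc)
  qed
  moreover have "F x \<otimes> inv (F y) \<in> B" using FB x y by auto
  ultimately show ?thesis unfolding Mk_def by auto
qed

end

lemma cl_all: "(\<And>i. i \<in> I \<Longrightarrow> closedin Z {p \<in> topspace Z. Q i p}) \<Longrightarrow> closedin Z {p \<in> topspace Z. \<forall>i\<in>I. Q i p}"
proof (cases "I = {}")
  case True then show ?thesis by simp
next
  case False
  assume H: "\<And>i. i \<in> I \<Longrightarrow> closedin Z {p \<in> topspace Z. Q i p}"
  have "{p \<in> topspace Z. \<forall>i\<in>I. Q i p} = \<Inter> ((\<lambda>i. {p \<in> topspace Z. Q i p}) ` I)"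
    using False by auto
  moreover have "closedin Z (\<Inter> ((\<lambda>i. {p \<in> topspace Z. Q i p}) ` I))"
    using H False by (intro closedin_Inter) auto
  ultimately show ?thesis by simp
qed

lemma cl_conj: "closedin Z {p \<in> topspace Z. P p} \<Longrightarrow> closedin Z {p \<in> topspace Z. Q p} \<Longrightarrow>
   closedin Z {p \<in> topspace Z. P p \<and> Q p}"
proof -
  assume "closedin Z {p \<in> topspace Z. P p}" "closedin Z {p \<in> topspace Z. Q p}"
  moreover have "{p \<in> topspace Z. P p \<and> Q p} = {p \<in> topspace Z. P p} \<inter> {p \<in> topspace Z. Q p}" by blast
  ultimately show ?thesis using closedin_Int by metis
qed

lemma cl_imp: "closedin Z {p \<in> topspace Z. \<not> P p} \<Longrightarrow> closedin Z {p \<in> topspace Z. Q p} \<Longrightarrow>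
   closedin Z {p \<in> topspace Z. P p \<longrightarrow> Q p}"
proof -
  assume "closedin Z {p \<in> topspace Z. \<not> P p}" "closedin Z {p \<in> topspace Z. Q p}"
  moreover have "{p \<in> topspace Z. P p \<longrightarrow> Q p} = {p \<in> topspace Z. \<not> P p} \<union> {p \<in> topspace Z. Q p}" by blast
  ultimately show ?thesis using closedin_Un by metis
qed

lemma cl_pre: "continuous_map Z Y e \<Longrightarrow> closedin Y C \<Longrightarrow> closedin Z {p \<in> topspace Z. e p \<in> C}"
  by (rule closedin_continuous_map_preimage)

lemma cl_npre: "continuous_map Z Y e \<Longrightarrow> openin Y C \<Longrightarrow> closedin Z {p \<in> topspace Z. e p \<notin> C}"
proof -
  assume "continuous_map Z Y e" "openin Y C"
  from openin_continuous_map_preimage[OF this]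
  have "closedin Z (topspace Z - {p \<in> topspace Z. e p \<in> C})" by (intro closedin_diff) auto
  moreover have "topspace Z - {p \<in> topspace Z. e p \<in> C} = {p \<in> topspace Z. e p \<notin> C}" by auto
  ultimately show ?thesis by simp
qed

context prof2 begin

definition cond :: "'a set \<Rightarrow> 'a set \<Rightarrow> nat \<Rightarrow> ('a \<Rightarrow> 'a) \<Rightarrow> ('a \<Rightarrow> 'a) \<Rightarrow> bool" where
 "cond A B k f g \<longleftrightarrow>
   (\<forall>x\<in>A. f x \<in> B) \<and> (\<forall>z\<in>B. g z \<in> A) \<and>
   (\<forall>x\<in>A. \<forall>y\<in>A. f x \<otimes> f y \<otimes> inv (f (x \<otimes> y)) \<in> Mk B k) \<and>
   (\<forall>z\<in>B. \<forall>w\<in>B. g z \<otimes> g w \<otimes> inv (g (z \<otimes> w)) \<in> Mk A k) \<and>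
   (\<forall>x\<in>A. \<forall>z\<in>B. f x \<otimes> inv z \<in> Mk B k \<longrightarrow> g z \<otimes> inv x \<in> Mk A k) \<and>
   (\<forall>z\<in>B. \<forall>x\<in>A. g z \<otimes> inv x \<in> Mk A k \<longrightarrow> f x \<otimes> inv z \<in> Mk B k) \<and>
   (\<forall>x\<in>A. \<forall>y\<in>A. x \<otimes> inv y \<in> Mk A k \<longrightarrow> f x \<otimes> inv (f y) \<in> Mk B k) \<and>
   (\<forall>z\<in>B. \<forall>w\<in>B. z \<otimes> inv w \<in> Mk B k \<longrightarrow> g z \<otimes> inv (g w) \<in> Mk A k)"

abbreviation "PT \<equiv> product_topology (\<lambda>_. T) (UNIV :: 'a set)"
abbreviation "XT \<equiv> prod_topology PT PT"

lemma ev1: "continuous_map XT T (\<lambda>p. fst p x)"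
  using continuous_map_compose[OF continuous_map_fst continuous_map_product_projection[of x UNIV "\<lambda>_. T"]]
  by (simp add: o_def)

lemma ev2: "continuous_map XT T (\<lambda>p. snd p x)"
  using continuous_map_compose[OF continuous_map_snd continuous_map_product_projection[of x UNIV "\<lambda>_. T"]]
  by (simp add: o_def)

lemma cond_closed:
  assumes A: "osg A" and B: "osg B"
  shows "closedin XT {p \<in> topspace XT. cond A B k (fst p) (snd p)}"
proof -
  have Ac: "A \<subseteq> carrier G" and Bc: "B \<subseteq> carrier G" using A B unfolding osg_def by (auto dest: subgroup.subset)
  have cA: "closedin T A" "openin T A" using A osg_closed unfolding osg_def by auto
  have cB: "closedin T B" "openin T B" using B osg_closed unfolding osg_def by auto
  have cMA: "closedin T (Mk A k)" "openin T (Mk A k)" using Mk_osg[OF A] osg_closed unfolding osg_def by auto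
  have cMB: "closedin T (Mk B k)" "openin T (Mk B k)" using Mk_osg[OF B] osg_closed unfolding osg_def by auto
  show ?thesis unfolding cond_def
    apply (intro cl_conj cl_all cl_imp cl_pre[where Y=T] cl_npre[where Y=T] cont_mult cont_inv ev1 ev2 cont_const cA cB cMA cMB)
    using Ac Bc by (meson subsetD)+
qed

lemma cont_lim:
  assumes A: "osg A" and B: "osg B" and fAB: "\<And>x. x \<in> A \<Longrightarrow> f x \<in> B"
    and fc: "\<And>k x y. x \<in> A \<Longrightarrow> y \<in> A \<Longrightarrow> x \<otimes> inv y \<in> Mk A k \<Longrightarrow> f x \<otimes> inv (f y) \<in> Mk B k"
  shows "continuous_map (subtopology T A) (subtopology T B) f"
proof -
  have Ac: "A \<subseteq> carrier G" and Bc: "B \<subseteq> carrier G" using A B unfolding osg_def by (auto dest: subgroup.subset)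
  have oA: "openin T A" and oB: "openin T B" using A B unfolding osg_def by auto
  interpret A: subgroup A G using A unfolding osg_def by blast
  have "openin (subtopology T A) {x \<in> topspace (subtopology T A). f x \<in> U}"
    if U: "openin (subtopology T B) U" for U
  proof -
    have U': "openin T U" "U \<subseteq> B" using U openin_open_subtopology[OF oB] by auto
    have ts: "{x \<in> topspace (subtopology T A). f x \<in> U} = {x \<in> A. f x \<in> U}" using Ac by auto
    have "openin T {x \<in> A. f x \<in> U}"
    proof (subst openin_subopen, intro ballI)
      fix x assume x: "x \<in> {x \<in> A. f x \<in> U}"
      have xc: "x \<in> carrier G" "f x \<in> carrier G" using x Ac Bc fAB by auto
      have o1: "openin T (U #> inv (f x))" using open_rcos[OF U'(1)] xc by simp
      have "f x \<otimes> inv (f x) \<in> U #> inv (f x)" using x unfolding r_coset_def by blast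
      then have "\<one> \<in> U #> inv (f x)" using xc by simp
      then obtain k where k: "Mk B k \<subseteq> U #> inv (f x)" using Mk_nbhd[OF B o1] by blast
      have MA: "osg (Mk A k)" "Mk A k \<subseteq> A" using Mk_osg[OF A] by auto
      have "openin T (Mk A k #> x)" using open_rcos[OF _ xc(1)] MA unfolding osg_def by auto
      moreover have "x \<in> Mk A k #> x" using rcos_self[OF xc(1)] MA unfolding osg_def by auto
      moreover have "Mk A k #> x \<subseteq> {x \<in> A. f x \<in> U}"
      proof
        fix y assume "y \<in> Mk A k #> x"
        then obtain m where m: "m \<in> Mk A k" "y = m \<otimes> x" unfolding r_coset_def by blast
        have yA: "y \<in> A" using m MA x by auto
        have mc: "m \<in> carrier G" using m MA Ac by auto
        have "y \<otimes> inv x = m" using m mc xc by (simp add: m_assoc)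
        then have "f y \<otimes> inv (f x) \<in> Mk B k" using fc[OF yA, of x] x m by auto
        then have "f y \<otimes> inv (f x) \<in> U #> inv (f x)" using k by blast
        then obtain u where u: "u \<in> U" "f y \<otimes> inv (f x) = u \<otimes> inv (f x)" unfolding r_coset_def by blast
        have "f y \<in> carrier G" "u \<in> carrier G" using yA fAB Bc u U' by auto
        then have "f y = u" using u xc by (metis gid7 gid4)
        then show "y \<in> {x \<in> A. f x \<in> U}" using yA u by simp
      qed
      ultimately show "\<exists>T'. openin T T' \<and> x \<in> T' \<and> T' \<subseteq> {x \<in> A. f x \<in> U}" by blast
    qed
    then show ?thesis unfolding ts using openin_open_subtopology[OF oA] by auto
  qed
  moreover have "f \<in> topspace (subtopology T A) \<rightarrow> topspace (subtopology T B)"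
    using fAB Ac Bc by auto
  ultimately show ?thesis unfolding continuous_map_def by blast
qed

end

context prof2 begin

lemma triv_eq:
  assumes A: "osg A" and a: "a \<in> carrier G" "b \<in> carrier G" and k: "\<And>k. a \<otimes> inv b \<in> Mk A k"
  shows "a = b"
proof -
  have "a \<otimes> inv b = \<one>" by (rule Mk_triv[OF A k])
  then show ?thesis using a by (metis gid7 l_one)
qed

lemma condD1:
  assumes "cond A B k f g"
  shows "\<forall>x\<in>A. f x \<in> B"
  using assms unfolding cond_def by (elim conjE) assumption

lemma condD2:
  assumes "cond A B k f g"
  shows "\<forall>z\<in>B. g z \<in> A"
  using assms unfolding cond_def by (elim conjE) assumption

lemma condD3:
  assumes "cond A B k f g"
  shows "\<forall>x\<in>A. \<forall>y\<in>A. f x \<otimes> f y \<otimes> inv (f (x \<otimes> y)) \<in> Mk B k"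
  using assms unfolding cond_def by (elim conjE) assumption

lemma condD4:
  assumes "cond A B k f g"
  shows "\<forall>z\<in>B. \<forall>w\<in>B. g z \<otimes> g w \<otimes> inv (g (z \<otimes> w)) \<in> Mk A k"
  using assms unfolding cond_def by (elim conjE) assumption

lemma condD5:
  assumes "cond A B k f g"
  shows "\<forall>x\<in>A. \<forall>z\<in>B. f x \<otimes> inv z \<in> Mk B k \<longrightarrow> g z \<otimes> inv x \<in> Mk A k"
  using assms unfolding cond_def by (elim conjE) assumption

lemma condD6:
  assumes "cond A B k f g"
  shows "\<forall>z\<in>B. \<forall>x\<in>A. g z \<otimes> inv x \<in> Mk A k \<longrightarrow> f x \<otimes> inv z \<in> Mk B k"
  using assms unfolding cond_def by (elim conjE) assumption

lemma condD7:
  assumes "cond A B k f g"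
  shows "\<forall>x\<in>A. \<forall>y\<in>A. x \<otimes> inv y \<in> Mk A k \<longrightarrow> f x \<otimes> inv (f y) \<in> Mk B k"
  using assms unfolding cond_def by (elim conjE) assumption

lemma condD8:
  assumes "cond A B k f g"
  shows "\<forall>z\<in>B. \<forall>w\<in>B. z \<otimes> inv w \<in> Mk B k \<longrightarrow> g z \<otimes> inv (g w) \<in> Mk A k"
  using assms unfolding cond_def by (elim conjE) assumption

lemma limit_iso:
  assumes A: "osg A" and B: "osg B"
    and ex: "\<And>m. \<exists>f g. (\<forall>x. f x \<in> carrier G) \<and> (\<forall>x. g x \<in> carrier G) \<and> (\<forall>k\<le>m. cond A B k f g)"
  shows "\<exists>f. f \<in> iso (G\<lparr>carrier := A\<rparr>) (G\<lparr>carrier := B\<rparr>) \<and> homeomorphic_map (subtopology T A) (subtopology T B) f"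
proof -
  have Ac: "A \<subseteq> carrier G" and Bc: "B \<subseteq> carrier G" using A B unfolding osg_def by (auto dest: subgroup.subset)
  interpret A: subgroup A G using A unfolding osg_def by blast
  interpret B: subgroup B G using B unfolding osg_def by blast
  define E where "E m = {p \<in> topspace XT. \<forall>k\<in>{..m}. cond A B k (fst p) (snd p)}" for m
  have tsp: "p \<in> topspace XT \<longleftrightarrow> (\<forall>x. fst p x \<in> carrier G) \<and> (\<forall>x. snd p x \<in> carrier G)" for p
    by (cases p) (simp add: PiE_UNIV_domain Pi_iff)
  have cs: "compact_space XT"
    by (simp add: compact_space_prod_topology compact_space_product_topology cpt)
  have "(\<Inter>m. E m) \<noteq> {}"
  proof (rule compact_space_imp_nest[OF cs])
    show "closedin XT (E m)" for m
      unfolding E_def by (intro cl_all cond_closed A B)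
    show "E m \<noteq> {}" for m
    proof -
      obtain f g where fg: "\<forall>x. f x \<in> carrier G" "\<forall>x. g x \<in> carrier G" "\<forall>k\<le>m. cond A B k f g"
        using ex[of m] by blast
      then have "(f, g) \<in> E m" unfolding E_def using tsp[of "(f,g)"] by auto
      then show ?thesis by blast
    qed
    show "decseq E" unfolding decseq_def E_def by auto
  qed
  then obtain p where p: "\<And>m. p \<in> E m" by blast
  define f where "f = fst p"
  define g where "g = snd p"
  have c: "cond A B k f g" for k using p[of k] unfolding E_def f_def g_def by auto
  have fB: "\<And>x. x \<in> A \<Longrightarrow> f x \<in> B" using condD1[OF c[of 0]] by blast
  have gA: "\<And>z. z \<in> B \<Longrightarrow> g z \<in> A" using condD2[OF c[of 0]] by blast
  have fc: "\<And>x. x \<in> A \<Longrightarrow> f x \<in> carrier G" using fB Bc by blast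
  have gc: "\<And>x. x \<in> B \<Longrightarrow> g x \<in> carrier G" using gA Ac by blast
  have fhom: "f (x \<otimes> y) = f x \<otimes> f y" if "x \<in> A" "y \<in> A" for x y
  proof -
    have "\<And>k. f x \<otimes> f y \<otimes> inv (f (x \<otimes> y)) \<in> Mk B k" using condD3[OF c] that by blast
    then have "f x \<otimes> f y = f (x \<otimes> y)" using triv_eq[OF B] that fc by simp
    then show ?thesis by simp
  qed
  have gf: "g (f x) = x" if x: "x \<in> A" for x
  proof -
    have "\<And>k. f x \<otimes> inv (f x) \<in> Mk B k" using Mk_osg[OF B] fc[OF x] unfolding osg_def
      by (simp add: subgroup.one_closed)
    then have "\<And>k. g (f x) \<otimes> inv x \<in> Mk A k" using condD5[OF c] x fB[OF x] by blast
    then show ?thesis using triv_eq[OF A] x gc fB Ac by blast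
  qed
  have fg: "f (g z) = z" if z: "z \<in> B" for z
  proof -
    have "\<And>k. g z \<otimes> inv (g z) \<in> Mk A k" using Mk_osg[OF A] gc[OF z] unfolding osg_def
      by (simp add: subgroup.one_closed)
    then have "\<And>k. f (g z) \<otimes> inv z \<in> Mk B k" using condD6[OF c] z gA[OF z] by blast
    then show ?thesis using triv_eq[OF B] z fc gA Bc by blast
  qed
  have cf: "continuous_map (subtopology T A) (subtopology T B) f"
  proof (rule cont_lim[OF A B fB])
    fix k x y assume "x \<in> A" "y \<in> A" "x \<otimes> inv y \<in> Mk A k"
    then show "f x \<otimes> inv (f y) \<in> Mk B k" using condD7[OF c[of k]] by blast
  qed blast
  have cg: "continuous_map (subtopology T B) (subtopology T A) g"
  proof (rule cont_lim[OF B A gA])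
    fix k x y assume "x \<in> B" "y \<in> B" "x \<otimes> inv y \<in> Mk B k"
    then show "g x \<otimes> inv (g y) \<in> Mk A k" using condD8[OF c[of k]] by blast
  qed blast
  have "homeomorphic_maps (subtopology T A) (subtopology T B) f g"
    unfolding homeomorphic_maps_def using cf cg gf fg by auto
  then have hm: "homeomorphic_map (subtopology T A) (subtopology T B) f"
    using homeomorphic_map_maps by blast
  have "f \<in> hom (G\<lparr>carrier := A\<rparr>) (G\<lparr>carrier := B\<rparr>)"
    unfolding hom_def using fB fhom by auto
  moreover have "bij_betw f A B"
    by (rule bij_betw_byWitness[of _ g]) (use gf fg fB gA in auto)
  ultimately have "f \<in> iso (G\<lparr>carrier := A\<rparr>) (G\<lparr>carrier := B\<rparr>)" unfolding iso_def by simp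
  then show ?thesis using hm by blast
qed

end

context group begin
lemma gid8: "g \<in> carrier G \<Longrightarrow> y \<in> carrier G \<Longrightarrow> a \<in> carrier G \<Longrightarrow>
   g \<otimes> (y \<otimes> inv (inv g \<otimes> a \<otimes> g)) \<otimes> inv g = g \<otimes> y \<otimes> inv g \<otimes> inv a"
  by (simp add: m_assoc inv_mult_group gid3 gid3')
lemma gid9: "a \<in> carrier G \<Longrightarrow> b \<in> carrier G \<Longrightarrow> c \<in> carrier G \<Longrightarrow>
   inv (a \<otimes> inv b) \<otimes> (a \<otimes> inv c) = b \<otimes> inv c"
  by (simp add: m_assoc inv_mult_group gid3 gid3')
lemma gid10: "g \<in> carrier G \<Longrightarrow> x \<in> carrier G \<Longrightarrow> y \<in> carrier G \<Longrightarrow>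
   g \<otimes> (x \<otimes> y) \<otimes> inv g = (g \<otimes> x \<otimes> inv g) \<otimes> (g \<otimes> y \<otimes> inv g)"
  by (simp add: m_assoc gid3 gid3')
lemma gid11: "g \<in> carrier G \<Longrightarrow> x \<in> carrier G \<Longrightarrow>
   g \<otimes> inv x \<otimes> inv g = inv (g \<otimes> x \<otimes> inv g)"
  by (simp add: m_assoc inv_mult_group)
end

context prof2 begin

lemma pi_eq:
  assumes N: "N \<lhd> G" and xy: "x \<in> carrier G" "y \<in> carrier G"
  shows "N #> x = N #> y \<longleftrightarrow> x \<otimes> inv y \<in> N"
proof -
  have sN: "subgroup N G" using N by (rule normal_imp_subgroup)
  have "x \<in> N #> y \<longleftrightarrow> x \<otimes> inv y \<in> N" using subgroup.rcos_module[OF sN is_group xy(2,1)] .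
  moreover have "N #> x = N #> y \<longleftrightarrow> x \<in> N #> y"
    using rcos_self[OF xy(1) sN] repr_independence[of x N y] xy sN by auto
  ultimately show ?thesis by simp
qed

lemma conj_small:
  assumes U: "U \<in> smallsg (carrier G) j" and g: "g \<in> carrier G"
  shows "{y \<in> carrier G. g \<otimes> y \<otimes> inv g \<in> U} \<in> smallsg (carrier G) j"
proof -
  obtain S where S: "finite S" "card S \<le> j" "S \<subseteq> carrier G" "carrier G = (\<Union>a\<in>S. U #> a)"
    and Us: "subgroup U G" "openin T U"
    using U unfolding smallsg_def by blast
  interpret U: subgroup U G by fact
  define U' where "U' = {y \<in> carrier G. g \<otimes> y \<otimes> inv g \<in> U}"
  have sg: "subgroup U' G"
  proof
    show "U' \<subseteq> carrier G" unfolding U'_def by auto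
    show "\<one> \<in> U'" unfolding U'_def using g by simp
    fix x y assume "x \<in> U'" "y \<in> U'"
    then show "x \<otimes> y \<in> U'" unfolding U'_def using g by (simp add: gid10)
  next
    fix x assume "x \<in> U'"
    then show "inv x \<in> U'" unfolding U'_def using g by (simp add: gid11)
  qed
  have "continuous_map T T (\<lambda>y. g \<otimes> y \<otimes> inv g)"
    using g by (intro cont_mult cont_const continuous_map_id[unfolded id_def]) auto
  from openin_continuous_map_preimage[OF this Us(2)]
  have op: "openin T U'" unfolding U'_def by simp
  have "carrier G = (\<Union>a\<in>(\<lambda>a. inv g \<otimes> a \<otimes> g) ` S. U' #> a)"
  proof
    show "(\<Union>a\<in>(\<lambda>a. inv g \<otimes> a \<otimes> g) ` S. U' #> a) \<subseteq> carrier G"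
      using S(3) g unfolding U'_def r_coset_def by auto
  next
    show "carrier G \<subseteq> (\<Union>a\<in>(\<lambda>a. inv g \<otimes> a \<otimes> g) ` S. U' #> a)"
    proof
      fix y assume y: "y \<in> carrier G"
      then have "g \<otimes> y \<otimes> inv g \<in> carrier G" using g by simp
      then obtain a where a: "a \<in> S" "g \<otimes> y \<otimes> inv g \<in> U #> a" using S(4) by blast
      have ac: "a \<in> carrier G" using a S(3) by auto
      have "g \<otimes> y \<otimes> inv g \<otimes> inv a \<in> U" using U.rcos_module_imp[OF is_group ac a(2)] .
      then have "y \<otimes> inv (inv g \<otimes> a \<otimes> g) \<in> U'" unfolding U'_def using g y ac by (simp add: gid8)
      then have "y \<in> U' #> (inv g \<otimes> a \<otimes> g)"
        using subgroup.rcos_module_rev[OF sg is_group _ y] g ac by simp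
      then show "y \<in> (\<Union>a\<in>(\<lambda>a. inv g \<otimes> a \<otimes> g) ` S. U' #> a)" using a by blast
    qed
  qed
  moreover have "card ((\<lambda>a. inv g \<otimes> a \<otimes> g) ` S) \<le> j" using le_trans[OF card_image_le[OF S(1)] S(2)] .
  moreover have "(\<lambda>a. inv g \<otimes> a \<otimes> g) ` S \<subseteq> carrier G" using S(3) g by auto
  ultimately have ex: "\<exists>S'. finite S' \<and> card S' \<le> j \<and> S' \<subseteq> carrier G \<and> carrier G = (\<Union>a\<in>S'. U' #> a)"
    using S(1) by (intro exI[of _ "(\<lambda>a. inv g \<otimes> a \<otimes> g) ` S"]) simp
  have "U' \<in> smallsg (carrier G) j" unfolding smallsg_def mem_Collect_eq
    using sg op subgroup.subset[OF sg] ex by (intro conjI) assumption+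
  then show ?thesis unfolding U'_def .
qed

lemma Mk_normal: "Mk (carrier G) j \<lhd> G"
proof -
  have o: "osg (carrier G)" unfolding osg_def using subgroup_self openin_topspace[of T] by simp
  have sg: "subgroup (Mk (carrier G) j) G" using Mk_osg[OF o] unfolding osg_def by blast
  have "g \<otimes> x \<otimes> inv g \<in> Mk (carrier G) j" if g: "g \<in> carrier G" and x: "x \<in> Mk (carrier G) j" for g x
  proof -
    have xc: "x \<in> carrier G" using x unfolding Mk_def by auto
    have "g \<otimes> x \<otimes> inv g \<in> U" if U: "U \<in> smallsg (carrier G) j" for U
    proof -
      have H: "{y \<in> carrier G. g \<otimes> y \<otimes> inv g \<in> U} \<in> smallsg (carrier G) j" by (rule conj_small[OF U g])
      have "x \<in> \<Inter> (smallsg (carrier G) j)" using x unfolding Mk_def by (rule IntD2)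
      then have "x \<in> {y \<in> carrier G. g \<otimes> y \<otimes> inv g \<in> U}" using H by (rule InterD)
      then show ?thesis by simp
    qed
    moreover have "g \<otimes> x \<otimes> inv g \<in> carrier G" using g xc by simp
    ultimately show ?thesis unfolding Mk_def by blast
  qed
  then show ?thesis by (intro normal_invI[OF sg])
qed

end

context prof2 begin

lemma iso_to_modiso:
  assumes N: "N \<lhd> G" and A: "osg A" and B: "osg B" and NA: "N \<subseteq> A" and NB: "N \<subseteq> B"
    and hb: "bij_betw h ((\<lambda>x. N #> x) ` A) ((\<lambda>x. N #> x) ` B)"
    and hm: "\<And>a b. a \<in> (\<lambda>x. N #> x) ` A \<Longrightarrow> b \<in> (\<lambda>x. N #> x) ` A \<Longrightarrow> h (a <#> b) = h a <#> h b"
  shows "\<exists>F. modiso N A B F \<and> (\<forall>x\<in>A. N #> F x = h (N #> x))"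
proof -
  interpret A: subgroup A G using A unfolding osg_def by blast
  interpret B: subgroup B G using B unfolding osg_def by blast
  interpret N: normal N G by fact
  have sN: "subgroup N G" using N by (rule normal_imp_subgroup)
  have Ac: "A \<subseteq> carrier G" and Bc: "B \<subseteq> carrier G" by (rule A.subset, rule B.subset)
  define F where "F x = (SOME z. z \<in> h (N #> x))" for x
  have Fx: "F x \<in> B \<and> N #> F x = h (N #> x)" if x: "x \<in> A" for x
  proof -
    have "h (N #> x) \<in> (\<lambda>x. N #> x) ` B" using hb x bij_betwE by blast
    then obtain c where c: "c \<in> B" "h (N #> x) = N #> c" by blast
    have cc: "c \<in> carrier G" using c Bc by auto
    have "c \<in> h (N #> x)" using c rcos_self[OF cc sN] by simp
    then have Fm: "F x \<in> N #> c" unfolding F_def using c by (metis someI_ex)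
    then obtain n where n: "n \<in> N" "F x = n \<otimes> c" unfolding r_coset_def by blast
    have "F x \<in> B" using n c NB by auto
    moreover have "N #> c = N #> F x" using repr_independence[OF Fm cc sN] .
    ultimately show ?thesis using c by simp
  qed
  have FB: "\<And>x. x \<in> A \<Longrightarrow> F x \<in> B" using Fx by blast
  have Fc: "\<And>x. x \<in> A \<Longrightarrow> F x \<in> carrier G" using FB Bc by blast
  have piF: "\<And>x. x \<in> A \<Longrightarrow> N #> F x = h (N #> x)" using Fx by blast
  have pimult: "(N #> x) <#> (N #> y) = N #> (x \<otimes> y)" if "x \<in> carrier G" "y \<in> carrier G" for x y
    using N.rcos_sum[OF that] .
  have h1: "h N = N"
  proof -
    have N1: "N = N #> \<one>" using N.subset by simp
    have NA1: "N \<in> (\<lambda>x. N #> x) ` A" by (rule image_eqI[where x="\<one>" and f="\<lambda>x. N #> x", OF N1 A.one_closed])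
    have "h N = h (N <#> N)" using pimult[of \<one> \<one>] N1 by simp
    also have "\<dots> = h N <#> h N" using hm[OF NA1 NA1] .
    finally have e: "h N = h N <#> h N" .
    have "h N \<in> (\<lambda>x. N #> x) ` B" by (rule bij_betwE[OF hb, rule_format, OF NA1])
    then obtain c where c: "c \<in> B" "h N = N #> c" by blast
    have cc: "c \<in> carrier G" using c Bc by auto
    have "N #> c = N #> (c \<otimes> c)" using e c pimult[OF cc cc] by simp
    then have "c \<otimes> inv (c \<otimes> c) \<in> N" using pi_eq[OF N cc] cc by simp
    moreover have "c \<otimes> inv (c \<otimes> c) = inv c" using cc by (simp add: inv_mult_group m_assoc[symmetric])
    ultimately have "c \<in> N" using cc by (metis inv_inv sN subgroup.m_inv_closed)
    then show ?thesis using c N.rcos_const[OF is_group] by simp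
  qed
  have "modiso N A B F" unfolding modiso_def
  proof (intro conjI ballI)
    show "F x \<in> B" if "x \<in> A" for x using FB that .
  next
    fix x y assume xy: "x \<in> A" "y \<in> A"
    have xyc: "x \<in> carrier G" "y \<in> carrier G" using xy Ac by auto
    have "N #> (F x \<otimes> F y) = (N #> F x) <#> (N #> F y)" using pimult Fc xy by simp
    also have "\<dots> = h (N #> x) <#> h (N #> y)" using piF xy by simp
    also have "\<dots> = h ((N #> x) <#> (N #> y))"
      using hm[OF imageI[OF xy(1)] imageI[OF xy(2)]] by simp
    also have "\<dots> = h (N #> (x \<otimes> y))" using pimult xyc by simp
    also have "\<dots> = N #> F (x \<otimes> y)" using piF xy by simp
    finally have "(F x \<otimes> F y) \<otimes> inv (F (x \<otimes> y)) \<in> N"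
      using pi_eq[OF N] Fc xy by simp
    then show "F x \<otimes> F y \<otimes> inv (F (x \<otimes> y)) \<in> N" by simp
  next
    fix x assume x: "x \<in> A"
    have xc: "x \<in> carrier G" using x Ac by auto
    have N1: "N = N #> \<one>" using N.subset by simp
    have "F x \<in> N \<longleftrightarrow> N #> F x = N #> \<one>" using pi_eq[OF N Fc[OF x], of \<one>] Fc[OF x] by simp
    also have "\<dots> \<longleftrightarrow> h (N #> x) = h (N #> \<one>)" using piF x h1 N1 by simp
    also have "\<dots> \<longleftrightarrow> N #> x = N #> \<one>"
      using inj_on_eq_iff[OF bij_betw_imp_inj_on[OF hb] imageI[OF x] imageI[OF A.one_closed]] .
    also have "\<dots> \<longleftrightarrow> x \<in> N" using pi_eq[OF N xc, of \<one>] xc by simp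
    finally show "F x \<in> N \<longleftrightarrow> x \<in> N" .
  next
    fix z assume z: "z \<in> B"
    have zc: "z \<in> carrier G" using z Bc by auto
    have "N #> z \<in> h ` ((\<lambda>x. N #> x) ` A)" using imageI[OF z, of "\<lambda>x. N #> x"] bij_betw_imp_surj_on[OF hb] by simp
    then obtain x where x: "x \<in> A" "N #> z = h (N #> x)" by blast
    then have "N #> z = N #> F x" using piF by simp
    then show "\<exists>x\<in>A. z \<otimes> inv (F x) \<in> N" using pi_eq[OF N zc Fc[OF x(1)]] x by blast
  qed
  then show ?thesis using piF by blast
qed

end

context prof2 begin

lemma approx:
  assumes N: "N \<lhd> G" "openin T N" and A: "osg A" and B: "osg B" and NA: "N \<subseteq> A" and NB: "N \<subseteq> B"
    and NMA: "N \<subseteq> Mk A m" and NMB: "N \<subseteq> Mk B m"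
    and F: "modiso N A B F" and Fi: "modiso N B A Fi"
    and c1: "\<And>x. x \<in> A \<Longrightarrow> Fi (F x) \<otimes> inv x \<in> N"
    and c2: "\<And>z. z \<in> B \<Longrightarrow> F (Fi z) \<otimes> inv z \<in> N"
  shows "\<exists>f g. (\<forall>x. f x \<in> carrier G) \<and> (\<forall>x. g x \<in> carrier G) \<and> (\<forall>k\<le>m. cond A B k f g)"
proof -
  interpret A: subgroup A G using A unfolding osg_def by blast
  interpret B: subgroup B G using B unfolding osg_def by blast
  have Ac: "A \<subseteq> carrier G" and Bc: "B \<subseteq> carrier G" by (rule A.subset, rule B.subset)
  have FB: "\<And>x. x \<in> A \<Longrightarrow> F x \<in> B" using F unfolding modiso_def by blast
  have Fh: "\<And>x y. x \<in> A \<Longrightarrow> y \<in> A \<Longrightarrow> F x \<otimes> F y \<otimes> inv (F (x \<otimes> y)) \<in> N"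
    using F unfolding modiso_def by blast
  have FiA: "\<And>x. x \<in> B \<Longrightarrow> Fi x \<in> A" using Fi unfolding modiso_def by blast
  have Fih: "\<And>x y. x \<in> B \<Longrightarrow> y \<in> B \<Longrightarrow> Fi x \<otimes> Fi y \<otimes> inv (Fi (x \<otimes> y)) \<in> N"
    using Fi unfolding modiso_def by blast
  have Fc: "\<And>x. x \<in> A \<Longrightarrow> F x \<in> carrier G" using FB Bc by blast
  have Fic: "\<And>x. x \<in> B \<Longrightarrow> Fi x \<in> carrier G" using FiA Ac by blast
  define f where "f x = (if x \<in> A then F x else \<one>)" for x
  define g where "g x = (if x \<in> B then Fi x else \<one>)" for x
  have fc: "\<forall>x. f x \<in> carrier G" unfolding f_def using Fc by simp
  have gc: "\<forall>x. g x \<in> carrier G" unfolding g_def using Fic by simp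
  have "cond A B k f g" if k: "k \<le> m" for k
  proof -
    have MA: "osg (Mk A k)" "Mk A k \<subseteq> A" using Mk_osg[OF A] by auto
    have MB: "osg (Mk B k)" "Mk B k \<subseteq> B" using Mk_osg[OF B] by auto
    have sMA: "subgroup (Mk A k) G" and sMB: "subgroup (Mk B k) G" using MA MB unfolding osg_def by auto
    have NkA: "N \<subseteq> Mk A k" using NMA Mk_anti[OF k] by blast
    have NkB: "N \<subseteq> Mk B k" using NMB Mk_anti[OF k] by blast
    have p1: "\<forall>x\<in>A. f x \<in> B" unfolding f_def using FB by simp
    have p2: "\<forall>z\<in>B. g z \<in> A" unfolding g_def using FiA by simp
    have p3: "\<forall>x\<in>A. \<forall>y\<in>A. f x \<otimes> f y \<otimes> inv (f (x \<otimes> y)) \<in> Mk B k"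
      unfolding f_def using Fh NkB by auto
    have p4: "\<forall>z\<in>B. \<forall>w\<in>B. g z \<otimes> g w \<otimes> inv (g (z \<otimes> w)) \<in> Mk A k"
      unfolding g_def using Fih NkA by auto
    have p7: "\<forall>x\<in>A. \<forall>y\<in>A. x \<otimes> inv y \<in> Mk A k \<longrightarrow> f x \<otimes> inv (f y) \<in> Mk B k"
      unfolding f_def using transport2[OF N A B NA NB F NkB] by simp
    have p8: "\<forall>z\<in>B. \<forall>w\<in>B. z \<otimes> inv w \<in> Mk B k \<longrightarrow> g z \<otimes> inv (g w) \<in> Mk A k"
      unfolding g_def using transport2[OF N B A NB NA Fi NkA] by simp
    have p5: "\<forall>x\<in>A. \<forall>z\<in>B. f x \<otimes> inv z \<in> Mk B k \<longrightarrow> g z \<otimes> inv x \<in> Mk A k"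
    proof (intro ballI impI)
      fix x z assume x: "x \<in> A" and z: "z \<in> B" and h: "f x \<otimes> inv z \<in> Mk B k"
      have "Fi (F x) \<otimes> inv (Fi z) \<in> Mk A k"
        using transport2[OF N B A NB NA Fi NkA FB[OF x] z] h x unfolding f_def by simp
      moreover have "Fi (F x) \<otimes> inv x \<in> Mk A k" using c1[OF x] NkA by blast
      ultimately have "inv (Fi (F x) \<otimes> inv (Fi z)) \<otimes> (Fi (F x) \<otimes> inv x) \<in> Mk A k"
        using subgroup.m_closed[OF sMA] subgroup.m_inv_closed[OF sMA] by blast
      then have "Fi z \<otimes> inv x \<in> Mk A k"
        using gid9[OF Fic[OF FB[OF x]] Fic[OF z]] x Ac by auto
      then show "g z \<otimes> inv x \<in> Mk A k" unfolding g_def using z by simp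
    qed
    have p6: "\<forall>z\<in>B. \<forall>x\<in>A. g z \<otimes> inv x \<in> Mk A k \<longrightarrow> f x \<otimes> inv z \<in> Mk B k"
    proof (intro ballI impI)
      fix z x assume z: "z \<in> B" and x: "x \<in> A" and h: "g z \<otimes> inv x \<in> Mk A k"
      have "F (Fi z) \<otimes> inv (F x) \<in> Mk B k"
        using transport2[OF N A B NA NB F NkB FiA[OF z] x] h z unfolding g_def by simp
      moreover have "F (Fi z) \<otimes> inv z \<in> Mk B k" using c2[OF z] NkB by blast
      ultimately have "inv (F (Fi z) \<otimes> inv (F x)) \<otimes> (F (Fi z) \<otimes> inv z) \<in> Mk B k"
        using subgroup.m_closed[OF sMB] subgroup.m_inv_closed[OF sMB] by blast
      then have "F x \<otimes> inv z \<in> Mk B k"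
        using gid9[OF Fc[OF FiA[OF z]] Fc[OF x]] z Bc by auto
      then show "f x \<otimes> inv z \<in> Mk B k" unfolding f_def using x by simp
    qed
    show ?thesis unfolding cond_def using p1 p2 p3 p4 p5 p6 p7 p8 by (intro conjI) assumption+
  qed
  then show ?thesis using fc gc by blast
qed

end

context prof2 begin

lemma quotient_data:
  assumes N: "N \<lhd> G" "openin T N"
  shows "group (G Mod N)" "finite (carrier (G Mod N))" "(\<lambda>x. N #> x) \<in> hom G (G Mod N)"
    "(\<lambda>x. N #> x) ` carrier G = carrier (G Mod N)"
    "continuous_map T (discrete_topology (carrier (G Mod N))) (\<lambda>x. N #> x)"
proof -
  interpret N: normal N G by fact
  have sN: "subgroup N G" using N(1) by (rule normal_imp_subgroup)
  show "group (G Mod N)" by (rule N.factorgroup_is_group)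
  show "(\<lambda>x. N #> x) \<in> hom G (G Mod N)" by (rule N.r_coset_hom_Mod)
  show im: "(\<lambda>x. N #> x) ` carrier G = carrier (G Mod N)" by (simp add: carrier_FactGroup)
  have "osg N" unfolding osg_def using sN N(2) by simp
  obtain S where S: "finite S" "S \<subseteq> carrier G" "carrier G = (\<Union>b\<in>S. N #> b)"
    using carrier_cover[OF \<open>osg N\<close>] by (elim exE conjE) (rule that; assumption)
  have "rcosets N \<subseteq> (\<lambda>a. N #> a) ` S" by (rule rcosets_bound[OF sN S(2,3)])
  moreover have "carrier (G Mod N) = rcosets N" by (simp add: FactGroup_def)
  ultimately show "finite (carrier (G Mod N))" using finite_subset[OF _ finite_imageI[OF S(1)]] by metis
  have "openin T {x \<in> topspace T. N #> x \<in> U}" for U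
  proof (subst openin_subopen, intro ballI)
    fix x assume x: "x \<in> {x \<in> topspace T. N #> x \<in> U}"
    then have xc: "x \<in> carrier G" by simp
    have "N #> x \<subseteq> {x \<in> topspace T. N #> x \<in> U}"
    proof
      fix y assume y: "y \<in> N #> x"
      then have yc: "y \<in> carrier G" using N.elemrcos_carrier[OF is_group xc] by blast
      have "N #> x = N #> y" by (rule repr_independence[OF y xc sN])
      then show "y \<in> {x \<in> topspace T. N #> x \<in> U}" using x yc by simp
    qed
    moreover have "x \<in> N #> x" using rcos_self[OF xc sN] .
    ultimately show "\<exists>T'. openin T T' \<and> x \<in> T' \<and> T' \<subseteq> {x \<in> topspace T. N #> x \<in> U}"
      using open_rcos[OF N(2) xc] by blast
  qed
  moreover have "(\<lambda>x. N #> x) \<in> topspace T \<rightarrow> topspace (discrete_topology (carrier (G Mod N)))"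
  proof (rule Pi_I)
    fix x assume "x \<in> topspace T"
    then have "N #> x \<in> (\<lambda>x. N #> x) ` carrier G" by simp
    then show "N #> x \<in> topspace (discrete_topology (carrier (G Mod N)))" unfolding im by simp
  qed
  ultimately show "continuous_map T (discrete_topology (carrier (G Mod N))) (\<lambda>x. N #> x)"
    unfolding continuous_map_def by blast
qed

lemma pair_from_iso:
  assumes N: "N \<lhd> G" and A: "osg A" and B: "osg B" and NA: "N \<subseteq> A" and NB: "N \<subseteq> B"
    and h: "h \<in> iso ((G Mod N)\<lparr>carrier := (\<lambda>x. N #> x) ` A\<rparr>) ((G Mod N)\<lparr>carrier := (\<lambda>x. N #> x) ` B\<rparr>)"
  shows "\<exists>F Fi. modiso N A B F \<and> modiso N B A Fi \<and> (\<forall>x\<in>A. Fi (F x) \<otimes> inv x \<in> N)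
     \<and> (\<forall>z\<in>B. F (Fi z) \<otimes> inv z \<in> N)"
proof -
  interpret A: subgroup A G using A unfolding osg_def by blast
  interpret B: subgroup B G using B unfolding osg_def by blast
  interpret N: normal N G by fact
  have Ac: "A \<subseteq> carrier G" and Bc: "B \<subseteq> carrier G" by (rule A.subset, rule B.subset)
  let ?PA = "(\<lambda>x. N #> x) ` A" and ?PB = "(\<lambda>x. N #> x) ` B"
  have hb: "bij_betw h ?PA ?PB" using h unfolding iso_def by simp
  have hm: "h (a <#> b) = h a <#> h b" if "a \<in> ?PA" "b \<in> ?PA" for a b
  proof -
    have hh: "h \<in> hom ((G Mod N)\<lparr>carrier := ?PA\<rparr>) ((G Mod N)\<lparr>carrier := ?PB\<rparr>)"
      using h unfolding iso_def by blast
    show ?thesis using hom_mult[OF hh, of a b] that by simp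
  qed
  have closA: "a <#> b \<in> ?PA" if ha: "a \<in> ?PA" and hb2: "b \<in> ?PA" for a b
  proof -
    obtain x where x: "x \<in> A" "a = N #> x" using ha by blast
    obtain y where y: "y \<in> A" "b = N #> y" using hb2 by blast
    have "a <#> b = N #> (x \<otimes> y)" using N.rcos_sum[of x y] x y A.mem_carrier by simp
    moreover have "N #> (x \<otimes> y) \<in> ?PA" using x(1) y(1) by (intro imageI A.m_closed)
    ultimately show ?thesis by simp
  qed
  define h' where "h' = inv_into ?PA h"
  have hb': "bij_betw h' ?PB ?PA" unfolding h'_def by (rule bij_betw_inv_into[OF hb])
  have inj: "inj_on h ?PA" using hb by (rule bij_betw_imp_inj_on)
  have hh': "\<And>b. b \<in> ?PB \<Longrightarrow> h (h' b) = b" unfolding h'_def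
    using hb by (simp add: bij_betw_def f_inv_into_f)
  have h'h: "\<And>a. a \<in> ?PA \<Longrightarrow> h' (h a) = a" unfolding h'_def using inj by simp
  have h'P: "\<And>b. b \<in> ?PB \<Longrightarrow> h' b \<in> ?PA" using hb' bij_betwE by blast
  have hm': "h' (a <#> b) = h' a <#> h' b" if "a \<in> ?PB" "b \<in> ?PB" for a b
  proof -
    have "h (h' a <#> h' b) = a <#> b" using hm[OF h'P h'P] that hh' by simp
    then have "h' (h (h' a <#> h' b)) = h' (a <#> b)" by simp
    then show ?thesis using h'h[OF closA[OF h'P h'P]] that by simp
  qed
  obtain F where F: "modiso N A B F" "\<forall>x\<in>A. N #> F x = h (N #> x)"
    using iso_to_modiso[OF N A B NA NB hb hm] by blast
  obtain Fi where Fi: "modiso N B A Fi" "\<forall>x\<in>B. N #> Fi x = h' (N #> x)"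
    using iso_to_modiso[OF N B A NB NA hb' hm'] by blast
  have FB: "\<And>x. x \<in> A \<Longrightarrow> F x \<in> B" using F(1) unfolding modiso_def by blast
  have FiA: "\<And>x. x \<in> B \<Longrightarrow> Fi x \<in> A" using Fi(1) unfolding modiso_def by blast
  have c1: "Fi (F x) \<otimes> inv x \<in> N" if x: "x \<in> A" for x
  proof -
    have "N #> Fi (F x) = h' (h (N #> x))" using Fi(2) F(2) FB x by simp
    also have "\<dots> = N #> x" using h'h x by simp
    finally show ?thesis using pi_eq[OF N] FiA FB x Ac by blast
  qed
  have c2: "F (Fi z) \<otimes> inv z \<in> N" if z: "z \<in> B" for z
  proof -
    have "N #> F (Fi z) = h (h' (N #> z))" using Fi(2) F(2) FiA z by simp
    also have "\<dots> = N #> z" using hh' z by simp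
    finally show ?thesis using pi_eq[OF N] FiA FB z Bc Ac by blast
  qed
  show ?thesis using F(1) Fi(1) c1 c2 by blast
qed

end

context prof2 begin

lemma main:
  fixes H0 :: "('c, 'd) monoid_scheme" and \<phi> :: "'a \<Rightarrow> 'c" and G1 G2 :: "'c set"
  assumes grp: "group H0"
    and sg1: "subgroup G1 H0" and sg2: "subgroup G2 H0"
    and hom: "\<phi> \<in> hom G H0"
    and cont: "continuous_map T (discrete_topology (carrier H0)) \<phi>"
    and noiso: "\<not> top_group_isomorphic
            (G\<lparr>carrier := {x \<in> carrier G. \<phi> x \<in> G1}\<rparr>) (subtopology T {x \<in> carrier G. \<phi> x \<in> G1})
            (G\<lparr>carrier := {x \<in> carrier G. \<phi> x \<in> G2}\<rparr>) (subtopology T {x \<in> carrier G. \<phi> x \<in> G2})"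
  shows "\<exists>(H :: 'a set monoid) \<psi> \<theta>.
           group H \<and> finite (carrier H) \<and>
           \<psi> \<in> hom G H \<and> \<psi> ` carrier G = carrier H \<and>
           continuous_map T (discrete_topology (carrier H)) \<psi> \<and>
           \<theta> \<in> hom H H0 \<and>
           (\<forall>x \<in> carrier G. \<phi> x = \<theta> (\<psi> x)) \<and>
           \<not> (H\<lparr>carrier := {h \<in> carrier H. \<theta> h \<in> G1}\<rparr> \<cong>
               H\<lparr>carrier := {h \<in> carrier H. \<theta> h \<in> G2}\<rparr>)"
proof (rule ccontr)
  assume C: "\<not> ?thesis"
  interpret H0: group H0 by (rule grp)
  interpret ph: group_hom G H0 \<phi>
    by (intro group_hom.intro group_hom_axioms.intro is_group grp hom)
  have pre: "osg {x \<in> carrier G. \<phi> x \<in> S}" if S: "subgroup S H0" for S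
  proof -
    interpret S: subgroup S H0 by (rule S)
    have "subgroup {x \<in> carrier G. \<phi> x \<in> S} G"
    proof
      show "{x \<in> carrier G. \<phi> x \<in> S} \<subseteq> carrier G" by auto
      show "\<one> \<in> {x \<in> carrier G. \<phi> x \<in> S}" by simp
      fix x y assume "x \<in> {x \<in> carrier G. \<phi> x \<in> S}" "y \<in> {x \<in> carrier G. \<phi> x \<in> S}"
      then show "x \<otimes> y \<in> {x \<in> carrier G. \<phi> x \<in> S}" by simp
    next
      fix x assume "x \<in> {x \<in> carrier G. \<phi> x \<in> S}"
      then show "inv x \<in> {x \<in> carrier G. \<phi> x \<in> S}" by simp
    qed
    moreover have "openin T {x \<in> carrier G. \<phi> x \<in> S}"
      using openin_continuous_map_preimage[OF cont, of S] S.subset by simp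
    ultimately show ?thesis unfolding osg_def by simp
  qed
  define A1 where "A1 = {x \<in> carrier G. \<phi> x \<in> G1}"
  define A2 where "A2 = {x \<in> carrier G. \<phi> x \<in> G2}"
  define K where "K = {x \<in> carrier G. \<phi> x \<in> {\<one>\<^bsub>H0\<^esub>}}"
  have oA1: "osg A1" unfolding A1_def by (rule pre[OF sg1])
  have oA2: "osg A2" unfolding A2_def by (rule pre[OF sg2])
  have oK: "osg K" unfolding K_def by (rule pre[OF H0.triv_subgroup])
  have KA1: "K \<subseteq> A1" unfolding K_def A1_def using subgroup.one_closed[OF sg1] by auto
  have KA2: "K \<subseteq> A2" unfolding K_def A2_def using subgroup.one_closed[OF sg2] by auto
  have sA1: "subgroup A1 G" and sA2: "subgroup A2 G" and sK: "subgroup K G"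
    using oA1 oA2 oK unfolding osg_def by auto
  have oC: "osg (carrier G)" unfolding osg_def using subgroup_self openin_topspace[of T] by simp
  have ex: "\<exists>f g. (\<forall>x. f x \<in> carrier G) \<and> (\<forall>x. g x \<in> carrier G) \<and> (\<forall>k\<le>m. cond A1 A2 k f g)" for m
  proof -
    obtain S1 where S1: "finite S1" "S1 \<subseteq> carrier G" "carrier G = (\<Union>b\<in>S1. A1 #> b)"
      using carrier_cover[OF oA1] by (elim exE conjE) (rule that; assumption)
    obtain S2 where S2: "finite S2" "S2 \<subseteq> carrier G" "carrier G = (\<Union>b\<in>S2. A2 #> b)"
      using carrier_cover[OF oA2] by (elim exE conjE) (rule that; assumption)
    obtain S0 where S0: "finite S0" "S0 \<subseteq> carrier G" "carrier G = (\<Union>b\<in>S0. K #> b)"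
      using carrier_cover[OF oK] by (elim exE conjE) (rule that; assumption)
    define j where "j = m * card S1 + m * card S2 + card S0"
    define N where "N = Mk (carrier G) j"
    have Nn: "N \<lhd> G" unfolding N_def by (rule Mk_normal)
    have No: "openin T N" using Mk_osg(1)[OF oC] unfolding N_def osg_def by blast
    have NU: "N \<subseteq> U" if "U \<in> smallsg (carrier G) j" for U using that unfolding N_def Mk_def by blast
    have "\<exists>S. finite S \<and> card S \<le> card S0 \<and> S \<subseteq> carrier G \<and> carrier G = (\<Union>b\<in>S. K #> b)"
      using S0 by (intro exI[of _ S0]) simp
    then have "K \<in> smallsg (carrier G) (card S0)" unfolding smallsg_def mem_Collect_eq
      using sK oK subgroup.subset[OF sK] unfolding osg_def by (intro conjI) blast+
    then have "K \<in> smallsg (carrier G) j" using smallsg_mono[of "card S0" j] by (metis j_def le_add1 le_add2 add_leE subsetD)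
    then have NK: "N \<subseteq> K" by (rule NU)
    have NA1: "N \<subseteq> A1" and NA2: "N \<subseteq> A2" using NK KA1 KA2 by auto
    have NMA1: "N \<subseteq> Mk A1 m"
    proof -
      have "N \<subseteq> U" if U: "U \<in> smallsg A1 m" for U
      proof -
        have "U \<in> smallsg (carrier G) (m * card S1)" by (rule cover_lift[OF sA1 S1 U])
        then have "U \<in> smallsg (carrier G) j" using smallsg_mono[of "m * card S1" j] by (metis j_def le_add1 le_add2 add_leE subsetD)
        then show ?thesis by (rule NU)
      qed
      then show ?thesis using NA1 unfolding Mk_def by blast
    qed
    have NMA2: "N \<subseteq> Mk A2 m"
    proof -
      have "N \<subseteq> U" if U: "U \<in> smallsg A2 m" for U
      proof -
        have "U \<in> smallsg (carrier G) (m * card S2)" by (rule cover_lift[OF sA2 S2 U])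
        then have "U \<in> smallsg (carrier G) j" using smallsg_mono[of "m * card S2" j] by (metis j_def le_add1 le_add2 add_leE subsetD)
        then show ?thesis by (rule NU)
      qed
      then show ?thesis using NA2 unfolding Mk_def by blast
    qed
    have phieq: "\<phi> x = \<phi> y" if xy: "x \<in> carrier G" "y \<in> carrier G" "N #> x = N #> y" for x y
    proof -
      have "x \<otimes> inv y \<in> K" using pi_eq[OF Nn xy(1,2)] xy(3) NK by blast
      then have "\<phi> (x \<otimes> inv y) = \<one>\<^bsub>H0\<^esub>" unfolding K_def by simp
      then have "\<phi> x \<otimes>\<^bsub>H0\<^esub> inv\<^bsub>H0\<^esub> \<phi> y = \<one>\<^bsub>H0\<^esub>" using xy by simp
      then show ?thesis using H0.gid7[of "\<phi> x" "\<phi> y"] xy by simp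
    qed
    obtain \<theta> where th: "\<theta> \<in> hom (G Mod N) H0" "\<And>x. x \<in> carrier G \<Longrightarrow> \<theta> (N #> x) = \<phi> x"
      using FactGroup_universal[OF hom Nn phieq] by blast
    note qd = quotient_data[OF Nn No]
    have Ceq: "{h \<in> carrier (G Mod N). \<theta> h \<in> Gi} = (\<lambda>x. N #> x) ` {x \<in> carrier G. \<phi> x \<in> Gi}" for Gi
    proof
      show "{h \<in> carrier (G Mod N). \<theta> h \<in> Gi} \<subseteq> (\<lambda>x. N #> x) ` {x \<in> carrier G. \<phi> x \<in> Gi}"
      proof
        fix h assume h: "h \<in> {h \<in> carrier (G Mod N). \<theta> h \<in> Gi}"
        then obtain x where x: "x \<in> carrier G" "h = N #> x" by (auto simp: carrier_FactGroup)
        then show "h \<in> (\<lambda>x. N #> x) ` {x \<in> carrier G. \<phi> x \<in> Gi}" using h th(2) by auto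
      qed
      show "(\<lambda>x. N #> x) ` {x \<in> carrier G. \<phi> x \<in> Gi} \<subseteq> {h \<in> carrier (G Mod N). \<theta> h \<in> Gi}"
        using th(2) by (auto simp: carrier_FactGroup)
    qed
    have P: "group (G Mod N) \<and> finite (carrier (G Mod N)) \<and>
           (\<lambda>x. N #> x) \<in> hom G (G Mod N) \<and> (\<lambda>x. N #> x) ` carrier G = carrier (G Mod N) \<and>
           continuous_map T (discrete_topology (carrier (G Mod N))) (\<lambda>x. N #> x) \<and>
           \<theta> \<in> hom (G Mod N) H0 \<and>
           (\<forall>x \<in> carrier G. \<phi> x = \<theta> (N #> x))"
      using qd th by simp
    have isoQ: "(G Mod N)\<lparr>carrier := {h \<in> carrier (G Mod N). \<theta> h \<in> G1}\<rparr> \<cong>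
               (G Mod N)\<lparr>carrier := {h \<in> carrier (G Mod N). \<theta> h \<in> G2}\<rparr>"
    proof (rule ccontr)
      assume n: "\<not> ?thesis"
      have "\<exists>(H :: 'a set monoid) \<psi> \<theta>.
           group H \<and> finite (carrier H) \<and>
           \<psi> \<in> hom G H \<and> \<psi> ` carrier G = carrier H \<and>
           continuous_map T (discrete_topology (carrier H)) \<psi> \<and>
           \<theta> \<in> hom H H0 \<and>
           (\<forall>x \<in> carrier G. \<phi> x = \<theta> (\<psi> x)) \<and>
           \<not> (H\<lparr>carrier := {h \<in> carrier H. \<theta> h \<in> G1}\<rparr> \<cong>
               H\<lparr>carrier := {h \<in> carrier H. \<theta> h \<in> G2}\<rparr>)"
        using P n by (intro exI[where x="G Mod N"] exI[where x="\<lambda>x. N #> x"] exI[where x=\<theta>]) simp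
      then show False using C by contradiction
    qed
    then obtain h where h: "h \<in> iso ((G Mod N)\<lparr>carrier := (\<lambda>x. N #> x) ` A1\<rparr>) ((G Mod N)\<lparr>carrier := (\<lambda>x. N #> x) ` A2\<rparr>)"
      unfolding is_iso_def Ceq A1_def A2_def by blast
    obtain F Fi where FF: "modiso N A1 A2 F" "modiso N A2 A1 Fi" "\<forall>x\<in>A1. Fi (F x) \<otimes> inv x \<in> N"
         "\<forall>z\<in>A2. F (Fi z) \<otimes> inv z \<in> N"
      using pair_from_iso[OF Nn oA1 oA2 NA1 NA2 h] by blast
    show ?thesis
      using approx[OF Nn No oA1 oA2 NA1 NA2 NMA1 NMA2 FF(1,2)] FF(3,4) by blast
  qed
  obtain f where f: "f \<in> iso (G\<lparr>carrier := A1\<rparr>) (G\<lparr>carrier := A2\<rparr>)"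
    "homeomorphic_map (subtopology T A1) (subtopology T A2) f"
    using limit_iso[OF oA1 oA2 ex] by blast
  then have "top_group_isomorphic (G\<lparr>carrier := A1\<rparr>) (subtopology T A1) (G\<lparr>carrier := A2\<rparr>) (subtopology T A2)"
    unfolding top_group_isomorphic_def by blast
  then show False using noiso unfolding A1_def A2_def by contradiction
qed

end

theorem proposition3p1:
  fixes G :: "('b, 'm) monoid_scheme"
    and Gt :: "('a, 'n) monoid_scheme"
    and T :: "'a topology"
    and G1 G2 :: "'b set"
    and \<phi> :: "'a \<Rightarrow> 'b"
  assumes "group G" and "finite (carrier G)"
    and "subgroup G1 G" and "subgroup G2 G"
    and "profinite_group Gt T"
    and "\<phi> \<in> hom Gt G" and "\<phi> ` carrier Gt = carrier G"
    and "continuous_map T (discrete_topology (carrier G)) \<phi>"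
    and "\<not> top_group_isomorphic
            (Gt\<lparr>carrier := {x \<in> carrier Gt. \<phi> x \<in> G1}\<rparr>) (subtopology T {x \<in> carrier Gt. \<phi> x \<in> G1})
            (Gt\<lparr>carrier := {x \<in> carrier Gt. \<phi> x \<in> G2}\<rparr>) (subtopology T {x \<in> carrier Gt. \<phi> x \<in> G2})"
    and "\<And>n::nat. n > 0 \<Longrightarrow> finite (open_subgroups_of_index Gt T n)"
  shows "\<exists>(H :: 'a set monoid) \<psi> \<theta>.
           group H \<and> finite (carrier H) \<and>
           \<psi> \<in> hom Gt H \<and> \<psi> ` carrier Gt = carrier H \<and>
           continuous_map T (discrete_topology (carrier H)) \<psi> \<and>
           \<theta> \<in> hom H G \<and>
           (\<forall>x \<in> carrier Gt. \<phi> x = \<theta> (\<psi> x)) \<and>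
           \<not> (H\<lparr>carrier := {h \<in> carrier H. \<theta> h \<in> G1}\<rparr> \<cong>
               H\<lparr>carrier := {h \<in> carrier H. \<theta> h \<in> G2}\<rparr>)"
proof -
  have grp: "group Gt" using assms(5) unfolding profinite_group_def topological_group_def by blast
  interpret P: prof2 Gt T
    by (intro prof2.intro prof.intro prof_axioms.intro prof2_axioms.intro grp assms(5) assms(10))
  show ?thesis by (rule P.main[OF assms(1) assms(3) assms(4) assms(6) assms(8) assms(9)])
qed

end
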